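(* Let $N\ge1$ and $0<s<1$. There exists a constant $C^*>0$ such that $$\mathfrak{p}_t(z)\ge C^*t^{-\frac{N}{2s}}\quad\text{for all } t>1 \text{ and all } z\in\mathbb{R}^N \text{ with } |z|\le t^{1/2}.$$
   Context: For $t>0$ let $\mathfrak{h}^{(s)}_t$ be the heat kernel of $-(-\Delta)^s$ on $\mathbb{R}^N$; it satisfies, for some constant $C_0\ge1$, $C_0^{-1}\min\{t^{-N/(2s)},t|x|^{-N-2s}\}\le\mathfrak{h}^{(s)}_t(x)\le C_0\min\{t^{-N/(2s)},t|x|^{-N-2s}\}$ for all $x\in\mathbb{R}^N$, $t>0$. The heat kernel of $-\mathcal{L}$, $\mathcal{L}=-\Delta+(-\Delta)^s$, is $\mathfrak{p}_t(z)=(4\pi t)^{-N/2}\int_{\mathbb{R}^N}e^{-|z-\xi|^2/(4t)}\mathfrak{h}^{(s)}_t(\xi)\,d\xi$. *)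

theory Defs
  imports "HOL-Analysis.Analysis"
begin

text \<open>Heat kernel of the mixed operator, built from a kernel h (standing for the
fractional heat kernel h^(s)_t) by Gaussian convolution on R^N, N = CARD('n):
p_t(z) = (4 pi t)^(-N/2) * integral of exp(-|z-xi|^2/(4t)) h_t(xi) d xi.\<close>
definition mixed_heat_kernel :: "(real \<Rightarrow> real^'n \<Rightarrow> real) \<Rightarrow> real \<Rightarrow> real^'n \<Rightarrow> real" where
  "mixed_heat_kernel h t z =
     (4 * pi * t) powr (- real CARD('n) / 2) *
     (\<integral>\<xi>. exp (- (norm (z - \<xi>))\<^sup>2 / (4 * t)) * h t \<xi> \<partial>lborel)"

end

theory Submission
  imports Defs "HOL-Probability.Probability"
begin

lemma gauss1_int:
  fixes t c :: real assumes t: "t > 0"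
  shows "integrable lborel (\<lambda>y::real. exp (- (c - y)\<^sup>2 / (4 * t)))"
proof -
  have "integrable lborel (\<lambda>y. sqrt (2 * pi * (sqrt (2*t))\<^sup>2) * normal_density c (sqrt (2*t)) y)"
    using t by (intro integrable_mult_right integrable_normal_density) auto
  moreover have "\<And>y. sqrt (2 * pi * (sqrt (2*t))\<^sup>2) * normal_density c (sqrt (2*t)) y = exp (- (c - y)\<^sup>2 / (4 * t))"
  proof -
    have "0 < sqrt (2*t)" using t by simp
    then show "\<And>y. sqrt (2 * pi * (sqrt (2*t))\<^sup>2) * normal_density c (sqrt (2*t)) y = exp (- (c - y)\<^sup>2 / (4 * t))"
      using t by (simp add: normal_density_def power2_commute[of c])
  qed
  ultimately show ?thesis by simp
qed

lemma gauss_int: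
  fixes t :: real and z :: "'a::euclidean_space" assumes t: "t > 0"
  shows "integrable lborel (\<lambda>\<xi>. exp (- (norm (z - \<xi>))\<^sup>2 / (4 * t)))"
proof -
  have eq: "exp (- (norm (z - \<xi>))\<^sup>2 / (4 * t)) = (\<Prod>b\<in>Basis. exp (- (z \<bullet> b - \<xi> \<bullet> b)\<^sup>2 / (4 * t)))" for \<xi>
  proof -
    have "(norm (z - \<xi>))\<^sup>2 = (z - \<xi>) \<bullet> (z - \<xi>)" by (simp add: power2_norm_eq_inner)
    also have "\<dots> = (\<Sum>b\<in>Basis. ((z - \<xi>) \<bullet> b) * ((z - \<xi>) \<bullet> b))" by (rule euclidean_inner)
    finally have "(norm (z - \<xi>))\<^sup>2 = (\<Sum>b\<in>Basis. (z \<bullet> b - \<xi> \<bullet> b)\<^sup>2)"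
      by (simp add: inner_diff_left power2_eq_square)
    then have "- (norm (z - \<xi>))\<^sup>2 / (4 * t) = (\<Sum>b\<in>Basis. - (z \<bullet> b - \<xi> \<bullet> b)\<^sup>2 / (4 * t))"
      by (simp add: sum_divide_distrib sum_negf)
    then show ?thesis by (simp add: exp_sum)
  qed
  have fin: "integral\<^sup>N lborel (\<lambda>y::real. ennreal (exp (- (z \<bullet> b - y)\<^sup>2 / (4 * t)))) < \<infinity>" for b
    using gauss1_int[OF t, of "z \<bullet> b"] by (subst nn_integral_eq_integral) auto
  have "(\<integral>\<^sup>+\<xi>. ennreal (norm (exp (- (norm (z - \<xi>))\<^sup>2 / (4 * t)))) \<partial>lborel)
      = (\<integral>\<^sup>+\<xi>. (\<Prod>b\<in>Basis. ennreal (exp (- (z \<bullet> b - \<xi> \<bullet> b)\<^sup>2 / (4 * t)))) \<partial>lborel)"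
    apply (rule nn_integral_cong)
    apply (subst eq)
    apply (simp add: prod_ennreal abs_of_nonneg prod_nonneg)
    done
  also have "\<dots> = (\<Prod>b\<in>Basis. (\<integral>\<^sup>+y. ennreal (exp (- (z \<bullet> b - y)\<^sup>2 / (4 * t))) \<partial>lborel))"
    by (rule nn_integral_lborel_prod[where f="\<lambda>b y. ennreal (exp (- (z \<bullet> b - y)\<^sup>2 / (4 * t)))"]) auto
  also have "\<dots> < \<infinity>"
    using fin by (simp add: less_top[symmetric] ennreal_prod_eq_top)
  finally show ?thesis
    by (intro integrableI_bounded) auto
qed

theorem lemma2p6:
  fixes h :: "real \<Rightarrow> real^'n \<Rightarrow> real" and s C0 :: real
  assumes s_pos: "0 < s" and s_lt1: "s < 1" and C0: "C0 \<ge> 1"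
    and meas: "\<And>t. t > 0 \<Longrightarrow> h t \<in> borel_measurable lborel"
    and at0_lower: "\<And>t. t > 0 \<Longrightarrow> h t 0 \<ge> (1 / C0) * t powr (- real CARD('n) / (2 * s))"
    and at0_upper: "\<And>t. t > 0 \<Longrightarrow> h t 0 \<le> C0 * t powr (- real CARD('n) / (2 * s))"
    and lower: "\<And>t x. t > 0 \<Longrightarrow> x \<noteq> 0 \<Longrightarrow>
       h t x \<ge> (1 / C0) * min (t powr (- real CARD('n) / (2 * s)))
                                (t * norm x powr (- real CARD('n) - 2 * s))"
    and upper: "\<And>t x. t > 0 \<Longrightarrow> x \<noteq> 0 \<Longrightarrow>
       h t x \<le> C0 * min (t powr (- real CARD('n) / (2 * s)))
                          (t * norm x powr (- real CARD('n) - 2 * s))"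
  shows "\<exists>C>0. \<forall>t>1. \<forall>z::real^'n. norm z \<le> sqrt t \<longrightarrow>
           mixed_heat_kernel h t z \<ge> C * t powr (- real CARD('n) / (2 * s))"
proof -
  define N where "N = real CARD('n)"
  define V where "V = measure lborel (ball (0::real^'n) 1)"
  have V: "V > 0" unfolding V_def by (rule content_ball_pos) simp
  define C where "C = (4 * pi) powr (- N / 2) * (exp (-1) / C0) * V"
  have Cpos: "C > 0" using V C0 unfolding C_def by simp
  have main: "mixed_heat_kernel h t z \<ge> C * t powr (- N / (2 * s))"
    if t: "t > 1" and z: "norm z \<le> sqrt t" for t and z :: "real^'n"
  proof -
    have t0: "t > 0" using t by simp
    define a where "a = t powr (- N / (2 * s))"
    have a: "a > 0" unfolding a_def using t0 by simp
    have hnn: "0 \<le> h t \<xi>" for \<xi>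
    proof (cases "\<xi> = 0")
      case True then show ?thesis using at0_lower[OF t0] C0 a unfolding a_def N_def
        by (smt (verit) divide_nonneg_nonneg mult_nonneg_nonneg)
    next
      case False
      have "0 \<le> (1 / C0) * min (t powr (- real CARD('n) / (2 * s)))
                                (t * norm \<xi> powr (- real CARD('n) - 2 * s))"
        using C0 t0 by (intro mult_nonneg_nonneg) auto
      then show ?thesis using lower[OF t0 False] by linarith
    qed
    have hub: "h t \<xi> \<le> C0 * a" for \<xi>
    proof (cases "\<xi> = 0")
      case True then show ?thesis using at0_upper[OF t0] unfolding a_def N_def by simp
    next
      case False
      have "C0 * min (t powr (- real CARD('n) / (2 * s))) (t * norm \<xi> powr (- real CARD('n) - 2 * s))
            \<le> C0 * a" unfolding a_def N_def using C0 by (intro mult_left_mono) auto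
      then show ?thesis using upper[OF t0 False] by linarith
    qed
    have hlb: "h t \<xi> \<ge> (1 / C0) * a" if xi: "norm \<xi> \<le> sqrt t" for \<xi>
    proof (cases "\<xi> = 0")
      case True then show ?thesis using at0_lower[OF t0] unfolding a_def N_def by simp
    next
      case False
      have "sqrt t = t powr (1/2)" using t0 by (simp add: powr_half_sqrt)
      also have "\<dots> \<le> t powr (1 / (2 * s))" using t s_pos s_lt1
        by (intro powr_mono) (auto simp: field_simps)
      finally have n1: "norm \<xi> \<le> t powr (1 / (2 * s))" using xi by linarith
      have "(t powr (1 / (2 * s))) powr (- N - 2 * s) \<le> norm \<xi> powr (- N - 2 * s)"
        using False n1 s_pos unfolding N_def by (intro powr_mono2') auto
      moreover have "(t powr (1 / (2 * s))) powr (- N - 2 * s) = t powr (- N / (2 * s) - 1)"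
        using s_pos by (simp add: powr_powr field_simps)
      moreover have "t * t powr (- N / (2 * s) - 1) = a"
        unfolding a_def using t0 by (simp add: powr_diff)
      ultimately have "a \<le> t * norm \<xi> powr (- N - 2 * s)"
        using t0 by (metis mult_left_mono less_imp_le)
      then have "(1 / C0) * a \<le> (1 / C0) * min (t powr (- real CARD('n) / (2 * s)))
                                (t * norm \<xi> powr (- real CARD('n) - 2 * s))"
        using C0 unfolding a_def N_def by (intro mult_left_mono) auto
      then show ?thesis using lower[OF t0 False] by linarith
    qed
    define F where "F = (\<lambda>\<xi>. exp (- (norm (z - \<xi>))\<^sup>2 / (4 * t)) * h t \<xi>)"
    have [measurable]: "h t \<in> borel_measurable lborel" using meas[OF t0] .
    have Fmeas: "F \<in> borel_measurable lborel" unfolding F_def by measurable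
    have Fint: "integrable lborel F"
    proof (rule Bochner_Integration.integrable_bound[OF _ Fmeas])
      show "integrable lborel (\<lambda>\<xi>. C0 * a * exp (- (norm (z - \<xi>))\<^sup>2 / (4 * t)))"
        using gauss_int[OF t0, of z] by (intro integrable_mult_right)
      show "AE x in lborel. norm (F x) \<le> norm (C0 * a * exp (- (norm (z - x))\<^sup>2 / (4 * t)))"
      proof (intro AE_I2)
        fix x
        have "norm (F x) = exp (- (norm (z - x))\<^sup>2 / (4 * t)) * h t x"
          unfolding F_def using hnn[of x] by simp
        also have "\<dots> \<le> exp (- (norm (z - x))\<^sup>2 / (4 * t)) * (C0 * a)"
          using hub[of x] by (intro mult_left_mono) auto
        finally show "norm (F x) \<le> norm (C0 * a * exp (- (norm (z - x))\<^sup>2 / (4 * t)))"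
          using C0 a by (simp add: mult.commute)
      qed
    qed
    define B where "B = ball (0::real^'n) (sqrt t)"
    have Bfin: "emeasure lborel B < \<infinity>" unfolding B_def by (rule emeasure_lborel_ball_finite)
    have Gint: "integrable lborel (\<lambda>\<xi>. indicator B \<xi> * (exp (-1) * ((1 / C0) * a)))"
      using Bfin unfolding B_def by (intro integrable_mult_left integrable_real_indicator) auto
    have GF: "indicator B \<xi> * (exp (-1) * ((1 / C0) * a)) \<le> F \<xi>" for \<xi>
    proof (cases "\<xi> \<in> B")
      case False then show ?thesis using hnn[of \<xi>] unfolding F_def by simp
    next
      case True
      then have xi: "norm \<xi> \<le> sqrt t" unfolding B_def by simp
      have "norm (z - \<xi>) \<le> 2 * sqrt t" using z xi norm_triangle_ineq4[of z \<xi>] by linarith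
      then have "(norm (z - \<xi>))\<^sup>2 \<le> (2 * sqrt t)\<^sup>2" by (intro power_mono) auto
      also have "\<dots> = 4 * t" using t0 by (simp add: power_mult_distrib)
      finally have "- (norm (z - \<xi>))\<^sup>2 / (4 * t) \<ge> -1" using t0 by (simp add: field_simps)
      then have e: "exp (-1) \<le> exp (- (norm (z - \<xi>))\<^sup>2 / (4 * t))" by simp
      have "exp (-1) * ((1 / C0) * a) \<le> exp (- (norm (z - \<xi>))\<^sup>2 / (4 * t)) * h t \<xi>"
        using e hlb[OF xi] C0 a by (intro mult_mono) auto
      then show ?thesis using True unfolding F_def by simp
    qed
    have "integral\<^sup>L lborel (\<lambda>\<xi>. indicator B \<xi> * (exp (-1) * ((1 / C0) * a))) \<le> integral\<^sup>L lborel F"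
      by (rule integral_mono[OF Gint Fint GF])
    moreover have "integral\<^sup>L lborel (\<lambda>\<xi>. indicator B \<xi> * (exp (-1) * ((1 / C0) * a)))
        = measure lborel B * (exp (-1) * ((1 / C0) * a))"
      by simp
    moreover have "measure lborel B = sqrt t ^ CARD('n) * V"
      unfolding B_def V_def using t0 by (subst content_ball_conv_unit_ball) auto
    moreover have "sqrt t ^ CARD('n) = t powr (N / 2)"
      unfolding N_def using t0 by (simp add: powr_half_sqrt[symmetric] powr_realpow[symmetric] powr_powr)
    ultimately have I: "t powr (N / 2) * V * (exp (-1) * ((1 / C0) * a)) \<le> integral\<^sup>L lborel F"
      by simp
    have P: "(4 * pi * t) powr (- N / 2) = (4 * pi) powr (- N / 2) * t powr (- N / 2)"
      using t0 by (simp add: powr_mult)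
    have Q: "t powr (- N / 2) * t powr (N / 2) = 1" using t0 by (simp add: powr_add[symmetric])
    have "C * a = (4 * pi * t) powr (- N / 2) * (t powr (N / 2) * V * (exp (-1) * ((1 / C0) * a)))"
      unfolding C_def P using Q by (simp add: algebra_simps)
    also have "\<dots> \<le> (4 * pi * t) powr (- N / 2) * integral\<^sup>L lborel F"
      using I by (intro mult_left_mono) auto
    also have "\<dots> = mixed_heat_kernel h t z"
      unfolding mixed_heat_kernel_def F_def N_def by simp
    finally show ?thesis unfolding a_def .
  qed
  show ?thesis using Cpos main unfolding N_def by blast
qed

end
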